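(* Assume $\Theta_0$ and $\Theta_1$ are nonempty. For $\theta_0\in\Theta_0$, $\theta_1\in\Theta_1$ and $\pi_0\in[0,1]$ let $Q_{\pi_0}=\pi_0\,\delta_{\theta_0}+(1-\pi_0)\,\delta_{\theta_1}$. A menu $\mathcal{F}\subseteq\bar{\mathcal{F}}$ satisfies $\liminf_{\pi_0\to 1^-} U(Q_{\pi_0},\mathcal{F})\ge 0$ for all $\theta_0\in\Theta_0$ and all $\theta_1\in\Theta_1$ if and only if $\mathcal{F}$ is incentive-aligned.
   Context: Let $\Theta$ be a set of types partitioned as $\Theta=\Theta_0\sqcup\Theta_1$ (null and nonnull types), and let $(P_\theta)_{\theta\in\Theta}$ be probability distributions on a measurable space $\mathcal{Z}$; $\mathbb{E}_\theta$ denotes expectation with $Z\sim P_\theta$. Fix a cost $C>0$. Fix an ambient class $\bar{\mathcal{F}}$ of measurable functions $f:\mathcal{Z}\to[0,\infty)$ ("license functions") with $\mathbb{E}_\theta[f(Z)]<\infty$ for all $\theta$. A menu is a subset $\mathcal{F}\subseteq\bar{\mathcal{F}}$; it is assumed (attainment assumption) that for every $\theta$, $\sup_{f\in\mathcal{F}}\mathbb{E}_\theta[f(Z)]$ is attained when $\mathcal{F}\ne\emptyset$. Agent behavior: an agent of type $\theta$ offered $\mathcal{F}$ opts in ($I=1$) iff $\mathcal{F}\neq\emptyset$ and $\max_{f\in\mathcal{F}}\mathbb{E}_\theta[f(Z)]>C$, in which case it selects some maximizer $f^{\mathrm{br}}(\cdot;\theta,\mathcal{F})\in\arg\max_{f\in\mathcal{F}}\mathbb{E}_\theta[f(Z)]$;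 otherwise it opts out ($I=0$). The realized license is $L=f^{\mathrm{br}}(Z;\theta,\mathcal{F})$ with $Z\sim P_\theta$. The principal's utility is a function $u:\Theta\times[0,\infty)\to\mathbb{R}$ such that: for $\theta\in\Theta_1$, $u(\theta,\cdot)$ is nondecreasing and $0\le u(\theta,L)\le a_1$ for some constant $a_1<\infty$; for $\theta\in\Theta_0$, $u(\theta,\cdot)$ is nonincreasing, $u(\theta,0)\le 0$ and $u(\theta,L)<0$ for all $L>0$. For a probability distribution $Q$ on $\Theta$, the principal's expected utility is $U(Q,\mathcal{F})=\mathbb{E}_{\theta\sim Q}\big[\mathbb{E}_{Z\sim P_\theta}[u(\theta,L)\cdot I\mid\theta]\big]$. A menu $\mathcal{F}$ is incentive-aligned if $\mathbb{E}_\theta[f(Z)]\le C$ for all $\theta\in\Theta_0$ and all $f\in\mathcal{F}$. *)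

theory Defs
  imports "HOL-Probability.Probability"
begin

text \<open>Expectation of a license function under P theta (Bochner integral; the
ambient class guarantees integrability).\<close>
definition expect :: "('t \<Rightarrow> 'z measure) \<Rightarrow> 't \<Rightarrow> ('z \<Rightarrow> real) \<Rightarrow> real" where
  "expect P \<theta> f = (\<integral>z. f z \<partial>(P \<theta>))"

text \<open>Extended-real expectation (positive part minus negative part), so that
expectations of utilities that are unbounded below (value -infinity) make sense.\<close>
definition ext_expect :: "'a measure \<Rightarrow> ('a \<Rightarrow> ereal) \<Rightarrow> ereal" where
  "ext_expect M g =
     enn2ereal (\<integral>\<^sup>+ x. e2ennreal (g x) \<partial>M) - enn2ereal (\<integral>\<^sup>+ x. e2ennreal (- g x) \<partial>M)"

text \<open>Opt-in indicator: the menu is nonempty and the best-response value exceeds C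
(fbr theta is the selected maximiser, so this is max_f E_theta f > C).\<close>
definition opts_in ::
  "('t \<Rightarrow> 'z measure) \<Rightarrow> real \<Rightarrow> ('z \<Rightarrow> real) set \<Rightarrow> ('t \<Rightarrow> 'z \<Rightarrow> real) \<Rightarrow> 't \<Rightarrow> bool" where
  "opts_in P C F fbr \<theta> \<longleftrightarrow> F \<noteq> {} \<and> expect P \<theta> (fbr \<theta>) > C"

definition cond_util ::
  "('t \<Rightarrow> 'z measure) \<Rightarrow> ('t \<Rightarrow> real \<Rightarrow> real) \<Rightarrow> real \<Rightarrow> ('z \<Rightarrow> real) set
    \<Rightarrow> ('t \<Rightarrow> 'z \<Rightarrow> real) \<Rightarrow> 't \<Rightarrow> ereal" where
  "cond_util P u C F fbr \<theta> =
     ext_expect (P \<theta>)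
       (\<lambda>z. ereal (u \<theta> (fbr \<theta> z) * (if opts_in P C F fbr \<theta> then 1 else 0)))"

definition U ::
  "('t \<Rightarrow> 'z measure) \<Rightarrow> ('t \<Rightarrow> real \<Rightarrow> real) \<Rightarrow> real \<Rightarrow> ('z \<Rightarrow> real) set
    \<Rightarrow> ('t \<Rightarrow> 'z \<Rightarrow> real) \<Rightarrow> 't pmf \<Rightarrow> ereal" where
  "U P u C F fbr Q = ext_expect (measure_pmf Q) (cond_util P u C F fbr)"

definition Qmix :: "real \<Rightarrow> 't \<Rightarrow> 't \<Rightarrow> 't pmf" where
  "Qmix \<pi>0 \<theta>0 \<theta>1 = map_pmf (\<lambda>b. if b then \<theta>0 else \<theta>1) (bernoulli_pmf \<pi>0)"

definition incentive_aligned ::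
  "('t \<Rightarrow> 'z measure) \<Rightarrow> real \<Rightarrow> 't set \<Rightarrow> ('z \<Rightarrow> real) set \<Rightarrow> bool" where
  "incentive_aligned P C \<Theta>0 F \<longleftrightarrow> (\<forall>\<theta>\<in>\<Theta>0. \<forall>f\<in>F. expect P \<theta> f \<le> C)"

end

theory Submission
  imports Defs
begin

lemma ext_expect_nonneg:
  assumes "\<And>x. x \<in> space M \<Longrightarrow> 0 \<le> g x"
  shows "0 \<le> ext_expect M g"
proof -
  have "(\<integral>\<^sup>+ x. e2ennreal (- g x) \<partial>M) = (\<integral>\<^sup>+ x. 0 \<partial>M)"
    by (rule nn_integral_cong) (use assms in \<open>auto intro: e2ennreal_neg\<close>)
  then show ?thesis unfolding ext_expect_def by (simp add: zero_ennreal.rep_eq)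
qed

lemma ereal_aux: "(a::ereal) \<le> c \<Longrightarrow> 0 \<le> b \<Longrightarrow> a - b \<le> c"
  by (metis ereal_diff_le_mono_left)


lemma ext_expect_le:
  assumes "prob_space M" "0 \<le> c" "\<And>x. x \<in> space M \<Longrightarrow> g x \<le> ereal c"
  shows "ext_expect M g \<le> ereal c"
proof -
  have "(\<integral>\<^sup>+ x. e2ennreal (g x) \<partial>M) \<le> (\<integral>\<^sup>+ x. ennreal c \<partial>M)"
    by (rule nn_integral_mono) (metis assms(3) e2ennreal_enn2ereal e2ennreal_mono enn2ereal_ennreal assms(2))
  also have "\<dots> = ennreal c" using prob_space.emeasure_space_1[OF assms(1)] by simp
  finally have "enn2ereal (\<integral>\<^sup>+ x. e2ennreal (g x) \<partial>M) \<le> ereal c"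
    by (metis assms(2) enn2ereal_ennreal less_eq_ennreal.rep_eq)
  moreover have "0 \<le> enn2ereal (\<integral>\<^sup>+ x. e2ennreal (- g x) \<partial>M)" by simp
  ultimately show ?thesis unfolding ext_expect_def by (rule ereal_aux)
qed

lemma U_Qmix:
  assumes "0 \<le> p" "p \<le> 1"
  shows "ext_expect (measure_pmf (Qmix p a b)) g =
     enn2ereal (ennreal p * e2ennreal (g a) + ennreal (1 - p) * e2ennreal (g b))
   - enn2ereal (ennreal p * e2ennreal (- g a) + ennreal (1 - p) * e2ennreal (- g b))"
  unfolding ext_expect_def Qmix_def using assms by (simp add: mult.commute)

lemma ext_expect_le_neg:
  assumes "prob_space M" "\<And>x. x \<in> space M \<Longrightarrow> g x \<le> 0" "A \<in> sets M" "0 \<le> d"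
    "\<And>x. x \<in> A \<Longrightarrow> g x \<le> - ereal d"
  shows "ext_expect M g \<le> - ereal (d * measure M A)"
proof -
  interpret prob_space M by fact
  have A: "A \<subseteq> space M" using assms(3) sets.sets_into_space by blast
  have p0: "(\<integral>\<^sup>+ x. e2ennreal (g x) \<partial>M) = (\<integral>\<^sup>+ x. 0 \<partial>M)"
    by (rule nn_integral_cong) (use assms in \<open>auto intro: e2ennreal_neg\<close>)
  have "(\<integral>\<^sup>+ x. ennreal d * indicator A x \<partial>M) \<le> (\<integral>\<^sup>+ x. e2ennreal (- g x) \<partial>M)"
  proof (rule nn_integral_mono)
    fix x assume "x \<in> space M"
    show "ennreal d * indicator A x \<le> e2ennreal (- g x)"
    proof (cases "x \<in> A")
      case True
      then have "ereal d \<le> - g x" using assms(5) by (metis ereal_minus_le_minus ereal_uminus_uminus)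
      then have "e2ennreal (ereal d) \<le> e2ennreal (- g x)" by (rule e2ennreal_mono)
      then show ?thesis using True by (simp add: e2ennreal_ereal)
    qed simp
  qed
  also have "(\<integral>\<^sup>+ x. ennreal d * indicator A x \<partial>M) = ennreal (d * measure M A)"
    using assms(3,4) by (subst nn_integral_cmult_indicator) (auto simp: emeasure_eq_measure ennreal_mult)
  finally have "ereal (d * measure M A) \<le> enn2ereal (\<integral>\<^sup>+ x. e2ennreal (- g x) \<partial>M)"
    using assms(4) by (metis enn2ereal_ennreal less_eq_ennreal.rep_eq measure_nonneg zero_le_mult_iff)
  then show ?thesis unfolding ext_expect_def p0
    by (simp add: zero_ennreal.rep_eq) (metis ereal_minus_le_minus uminus_ereal.simps(1))
qed

lemma pos_set:
  fixes h :: "'a \<Rightarrow> real"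
  assumes "prob_space M" "h \<in> borel_measurable M" "\<And>x. x \<in> space M \<Longrightarrow> 0 \<le> h x"
    "0 < integral\<^sup>L M h"
  shows "\<exists>t>0. 0 < measure M {x\<in>space M. t \<le> h x}"
proof (rule ccontr)
  interpret prob_space M by fact
  assume "\<not> ?thesis"
  then have z: "\<And>t. t > 0 \<Longrightarrow> measure M {x\<in>space M. t \<le> h x} = 0"
    using measure_nonneg by (metis less_eq_real_def)
  have sets: "{x\<in>space M. t \<le> h x} \<in> sets M" for t
    using borel_measurable_le[of "\<lambda>_. t" M h] assms(2) by simp
  have "(\<Union>n. {x\<in>space M. 1 / Suc n \<le> h x}) \<in> null_sets M"
    using z sets by (intro null_sets_UN) (auto simp: null_sets_def emeasure_eq_measure)
  moreover have "{x\<in>space M. h x \<noteq> 0} \<subseteq> (\<Union>n. {x\<in>space M. 1 / Suc n \<le> h x})"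
  proof
    fix x assume x: "x \<in> {x\<in>space M. h x \<noteq> 0}"
    then have "h x > 0" using assms(3) by force
    then obtain n where "1 / Suc n < h x" using nat_approx_posE by blast
    then show "x \<in> (\<Union>n. {x\<in>space M. 1 / Suc n \<le> h x})" using x less_imp_le by auto
  qed
  ultimately have "AE x in M. h x = 0"
    by (intro AE_I[where N="\<Union>n. {x\<in>space M. 1 / Suc n \<le> h x}"]) (auto simp: null_sets_def)
  then have "integral\<^sup>L M h = integral\<^sup>L M (\<lambda>_. 0)" by (intro integral_cong_AE) (use assms(2) in auto)
  then show False using assms(4) by simp
qed

theorem proposition2p3:
  fixes \<Theta>0 \<Theta>1 :: "'t set"
    and Z :: "'z measure"
    and P :: "'t \<Rightarrow> 'z measure"
    and C a1 :: real
    and Fbar F :: "('z \<Rightarrow> real) set"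
    and u :: "'t \<Rightarrow> real \<Rightarrow> real"
    and fbr :: "'t \<Rightarrow> 'z \<Rightarrow> real"
  assumes partition: "\<Theta>0 \<inter> \<Theta>1 = {}" "\<Theta>0 \<union> \<Theta>1 = UNIV"
    and nonempty: "\<Theta>0 \<noteq> {}" "\<Theta>1 \<noteq> {}"
    and probs: "\<And>\<theta>. prob_space (P \<theta>)" "\<And>\<theta>. sets (P \<theta>) = sets Z"
    and C_pos: "C > 0"
    and Fbar: "\<And>f. f \<in> Fbar \<Longrightarrow> f \<in> borel_measurable Z \<and> (\<forall>z\<in>space Z. 0 \<le> f z)
                    \<and> (\<forall>\<theta>. integrable (P \<theta>) f)"
    and menu: "F \<subseteq> Fbar"
    and attain: "F \<noteq> {} \<Longrightarrow> \<forall>\<theta>. \<exists>f\<in>F. \<forall>g\<in>F. expect P \<theta> g \<le> expect P \<theta> f"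
    and best_response: "F \<noteq> {} \<Longrightarrow>
          \<forall>\<theta>. fbr \<theta> \<in> F \<and> (\<forall>g\<in>F. expect P \<theta> g \<le> expect P \<theta> (fbr \<theta>))"
    and u1: "\<And>\<theta>. \<theta> \<in> \<Theta>1 \<Longrightarrow> mono_on {0..} (u \<theta>)"
            "\<And>\<theta> L. \<theta> \<in> \<Theta>1 \<Longrightarrow> 0 \<le> L \<Longrightarrow> 0 \<le> u \<theta> L \<and> u \<theta> L \<le> a1"
    and u0: "\<And>\<theta> L L'. \<theta> \<in> \<Theta>0 \<Longrightarrow> 0 \<le> L \<Longrightarrow> L \<le> L' \<Longrightarrow> u \<theta> L' \<le> u \<theta> L"
            "\<And>\<theta>. \<theta> \<in> \<Theta>0 \<Longrightarrow> u \<theta> 0 \<le> 0"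
            "\<And>\<theta> L. \<theta> \<in> \<Theta>0 \<Longrightarrow> L > 0 \<Longrightarrow> u \<theta> L < 0"
  shows "(\<forall>\<theta>0\<in>\<Theta>0. \<forall>\<theta>1\<in>\<Theta>1.
            Liminf (at_left 1) (\<lambda>\<pi>0. U P u C F fbr (Qmix \<pi>0 \<theta>0 \<theta>1)) \<ge> 0)
         \<longleftrightarrow> incentive_aligned P C \<Theta>0 F"
  proof -
  have spc: "space (P \<theta>) = space Z" for \<theta> using probs(2) sets_eq_imp_space_eq by blast
  have meas: "f \<in> borel_measurable (P \<theta>)" if "f \<in> Fbar" for f \<theta>
    using Fbar[OF that] measurable_cong_sets[OF probs(2) refl] by blast
  have fbrF: "F \<noteq> {} \<Longrightarrow> fbr \<theta> \<in> Fbar" for \<theta> using best_response menu by blast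
  have fbr_nn: "opts_in P C F fbr \<theta> \<Longrightarrow> z \<in> space (P \<theta>) \<Longrightarrow> 0 \<le> fbr \<theta> z" for \<theta> z
    using fbrF Fbar spc unfolding opts_in_def by blast
  have cu1_nn: "0 \<le> cond_util P u C F fbr \<theta>" if "\<theta> \<in> \<Theta>1" for \<theta>
    unfolding cond_util_def
    by (rule ext_expect_nonneg) (use fbr_nn u1(2)[OF that] in auto)
  have a1: "0 \<le> a1"
  proof -
    obtain \<theta> where "\<theta> \<in> \<Theta>1" using nonempty(2) by blast
    then show ?thesis using u1(2)[of \<theta> 0] by auto
  qed
  have cu1_le: "cond_util P u C F fbr \<theta> \<le> ereal a1" if "\<theta> \<in> \<Theta>1" for \<theta>
    unfolding cond_util_def
    by (rule ext_expect_le[OF probs(1) a1]) (use fbr_nn u1(2)[OF that] a1 in auto)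
  show ?thesis
  proof
    assume L: "\<forall>\<theta>0\<in>\<Theta>0. \<forall>\<theta>1\<in>\<Theta>1.
            Liminf (at_left 1) (\<lambda>\<pi>0. U P u C F fbr (Qmix \<pi>0 \<theta>0 \<theta>1)) \<ge> 0"
    show "incentive_aligned P C \<Theta>0 F"
    proof (rule ccontr)
      assume "\<not> ?thesis"
      then obtain \<theta>0 f where th0: "\<theta>0 \<in> \<Theta>0" and f: "f \<in> F" and fC: "expect P \<theta>0 f > C"
        unfolding incentive_aligned_def by (auto simp: not_le)
      obtain \<theta>1 where th1: "\<theta>1 \<in> \<Theta>1" using nonempty(2) by blast
      define h where "h = fbr \<theta>0"
      have Fne: "F \<noteq> {}" using f by blast
      have hC: "expect P \<theta>0 h > C" proof -
        have "expect P \<theta>0 f \<le> expect P \<theta>0 (fbr \<theta>0)" using best_response[OF Fne] f by blast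
        then show ?thesis using fC unfolding h_def by linarith
      qed
      have opt: "opts_in P C F fbr \<theta>0" using hC Fne unfolding opts_in_def h_def by simp
      have hF: "h \<in> Fbar" using fbrF[OF Fne] h_def by simp
      have hnn: "z \<in> space (P \<theta>0) \<Longrightarrow> 0 \<le> h z" for z using fbr_nn[OF opt] h_def by simp
      have hpos: "0 < integral\<^sup>L (P \<theta>0) h" using hC C_pos unfolding expect_def by simp
      obtain t where t: "t > 0" and mt: "0 < measure (P \<theta>0) {x\<in>space (P \<theta>0). t \<le> h x}"
        using pos_set[OF probs(1) meas[OF hF] hnn hpos] by blast
      define A where "A = {x\<in>space (P \<theta>0). t \<le> h x}"
      have A: "A \<in> sets (P \<theta>0)"
        unfolding A_def using borel_measurable_le[of "\<lambda>_. t" "P \<theta>0" h] meas[OF hF] by simp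
      define d where "d = - u \<theta>0 t"
      have d: "d > 0" using u0(3)[OF th0 t] d_def by simp
      define \<delta> where "\<delta> = d * measure (P \<theta>0) A"
      have \<delta>: "\<delta> > 0" using d mt unfolding \<delta>_def A_def by simp
      have g1: "ereal (u \<theta>0 (fbr \<theta>0 x) * (if opts_in P C F fbr \<theta>0 then 1 else 0)) \<le> 0"
        if "x \<in> space (P \<theta>0)" for x
      proof -
        have "0 \<le> fbr \<theta>0 x" using hnn that unfolding h_def by blast
        then have "u \<theta>0 (fbr \<theta>0 x) \<le> u \<theta>0 0" using u0(1)[OF th0, of 0 "fbr \<theta>0 x"] by blast
        then have "u \<theta>0 (fbr \<theta>0 x) \<le> 0" using u0(2)[OF th0] by linarith
        then show ?thesis using opt by simp
      qed
      have g2: "ereal (u \<theta>0 (fbr \<theta>0 x) * (if opts_in P C F fbr \<theta>0 then 1 else 0)) \<le> - ereal d"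
        if "x \<in> A" for x
      proof -
        have "t \<le> fbr \<theta>0 x" using that unfolding A_def h_def by blast
        then have "u \<theta>0 (fbr \<theta>0 x) \<le> u \<theta>0 t" using u0(1)[OF th0, of t "fbr \<theta>0 x"] t by simp
        then have "u \<theta>0 (fbr \<theta>0 x) \<le> - d" unfolding d_def by linarith
        then show ?thesis using opt by simp
      qed
      have d0: "0 \<le> d" using d by simp
      have cu0: "cond_util P u C F fbr \<theta>0 \<le> - ereal \<delta>"
        unfolding cond_util_def \<delta>_def by (rule ext_expect_le_neg[OF probs(1) g1 A d0 g2])
      define g where "g = cond_util P u C F fbr"
      have Ule: "U P u C F fbr (Qmix p \<theta>0 \<theta>1) \<le> ereal ((1 - p) * a1 - p * \<delta>)"
        if p: "0 \<le> p" "p \<le> 1" for p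
      proof -
        have cg: "g \<theta>0 \<le> - ereal \<delta>" using cu0 unfolding g_def .
        have e0: "e2ennreal (g \<theta>0) = 0"
          by (rule e2ennreal_neg) (use cg \<delta> in \<open>simp add: order.trans[of "g \<theta>0" "- ereal \<delta>" 0]\<close>)
        have e1: "e2ennreal (g \<theta>1) \<le> ennreal a1"
          using e2ennreal_mono[OF cu1_le[OF th1]] unfolding g_def by (simp add: e2ennreal_ereal)
        have "- (- ereal \<delta>) \<le> - g \<theta>0" using cg by (subst ereal_minus_le_minus)
        then have "ereal \<delta> \<le> - g \<theta>0" by (simp only: ereal_uminus_uminus)
        then have e2: "ennreal \<delta> \<le> e2ennreal (- g \<theta>0)"
          using e2ennreal_mono[of "ereal \<delta>" "- g \<theta>0"] by (simp add: e2ennreal_ereal)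
        have pos: "ennreal p * e2ennreal (g \<theta>0) + ennreal (1 - p) * e2ennreal (g \<theta>1) \<le> ennreal ((1 - p) * a1)"
          using e0 e1 p a1 by (simp add: ennreal_mult mult_left_mono)
        have neg: "ennreal (p * \<delta>) \<le> ennreal p * e2ennreal (- g \<theta>0) + ennreal (1 - p) * e2ennreal (- g \<theta>1)"
          using e2 p \<delta> by (simp add: ennreal_mult mult_left_mono add_increasing2)
        have "U P u C F fbr (Qmix p \<theta>0 \<theta>1) =
           enn2ereal (ennreal p * e2ennreal (g \<theta>0) + ennreal (1 - p) * e2ennreal (g \<theta>1))
         - enn2ereal (ennreal p * e2ennreal (- g \<theta>0) + ennreal (1 - p) * e2ennreal (- g \<theta>1))"
          unfolding U_def g_def by (rule U_Qmix[OF p])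
        also have "\<dots> \<le> enn2ereal (ennreal ((1 - p) * a1)) - enn2ereal (ennreal (p * \<delta>))"
          by (intro ereal_minus_mono) (use pos neg in \<open>auto simp: less_eq_ennreal.rep_eq\<close>)
        also have "\<dots> = ereal ((1 - p) * a1 - p * \<delta>)"
          using p a1 \<delta> by simp
        finally show ?thesis .
      qed
      define p1 where "p1 = (a1 + \<delta> / 2) / (a1 + \<delta>)"
      have p1: "p1 < 1" "0 \<le> p1" using a1 \<delta> unfolding p1_def by (auto simp: field_simps)
      have "eventually (\<lambda>p. p \<in> {p1<..<1}) (at_left (1::real))"
        by (rule eventually_at_left_real) (use p1 in simp)
      then have "eventually (\<lambda>p. U P u C F fbr (Qmix p \<theta>0 \<theta>1) \<le> ereal (- \<delta> / 2)) (at_left (1::real))"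
      proof (rule eventually_mono)
        fix p assume p: "p \<in> {p1<..<1}"
        have "p1 * (a1 + \<delta>) < p * (a1 + \<delta>)" using p a1 \<delta> by (intro mult_strict_right_mono) auto
        moreover have "p1 * (a1 + \<delta>) = a1 + \<delta> / 2"
          unfolding p1_def using a1 \<delta> by simp
        moreover have "(1 - p) * a1 - p * \<delta> = a1 - p * (a1 + \<delta>)" by (simp add: algebra_simps)
        ultimately have "(1 - p) * a1 - p * \<delta> \<le> - \<delta> / 2" by linarith
        then show "U P u C F fbr (Qmix p \<theta>0 \<theta>1) \<le> ereal (- \<delta> / 2)"
          using Ule[of p] p p1 by (meson ereal_less_eq(3) greaterThanLessThan_iff less_eq_real_def order.trans)
      qed
      then have "Liminf (at_left 1) (\<lambda>p. U P u C F fbr (Qmix p \<theta>0 \<theta>1)) \<le> ereal (- \<delta> / 2)"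
        by (intro Liminf_le) auto
      moreover have "ereal (- \<delta> / 2) < 0" using \<delta> by simp
      moreover have "0 \<le> Liminf (at_left 1) (\<lambda>p. U P u C F fbr (Qmix p \<theta>0 \<theta>1))"
        using L th0 th1 by blast
      ultimately show False by (meson not_le order.trans)
    qed
  next
    assume IA: "incentive_aligned P C \<Theta>0 F"
    have cu_nn: "0 \<le> cond_util P u C F fbr \<theta>" for \<theta>
    proof (cases "\<theta> \<in> \<Theta>1")
      case True then show ?thesis by (rule cu1_nn)
    next
      case False
      then have "\<theta> \<in> \<Theta>0" using partition by blast
      then have "\<not> opts_in P C F fbr \<theta>"
        proof -
        have "F \<noteq> {} \<Longrightarrow> expect P \<theta> (fbr \<theta>) \<le> C"
          using IA best_response \<open>\<theta> \<in> \<Theta>0\<close> unfolding incentive_aligned_def by blast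
        then show ?thesis unfolding opts_in_def using not_less by blast
      qed
      then show ?thesis unfolding cond_util_def by (intro ext_expect_nonneg) simp
    qed
    show "\<forall>\<theta>0\<in>\<Theta>0. \<forall>\<theta>1\<in>\<Theta>1.
            Liminf (at_left 1) (\<lambda>\<pi>0. U P u C F fbr (Qmix \<pi>0 \<theta>0 \<theta>1)) \<ge> 0"
    proof (intro ballI Liminf_bounded always_eventually allI)
      fix \<theta>0 \<theta>1 p
      show "0 \<le> U P u C F fbr (Qmix p \<theta>0 \<theta>1)"
        unfolding U_def by (intro ext_expect_nonneg cu_nn)
    qed
  qed
qed

end
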